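(* Let $(\tau_i,u_i)_{i\in\mathbb Z}$ be a $C^1$-in-time solution of scheme (H) with $\tau_i>0$, and $(\bar\tau_i,\bar u_i)_{i\in\mathbb Z}$ a $C^1$-in-time solution of scheme (P) with $\bar\tau_i>0$ (same $\lambda$, $\sigma$, $\Delta x$). Then for every $i\in\mathbb Z$, $$\frac{d\eta_i^\varepsilon}{dt}+\frac{1}{\Delta x}(\psi_{i+1/2}-\psi_{i-1/2})=-\sigma(u_i-\bar u_i)^2+\frac1\sigma\,\frac{p(\bar\tau_{i+2})-2p(\bar\tau_i)+p(\bar\tau_{i-2})}{(2\Delta x)^2}\,p(\tau_i|\bar\tau_i)+\frac{\varepsilon^2}{\sigma}(u_i-\bar u_i)\frac{d}{dt}\Big(\frac{p(\bar\tau_{i+1})-p(\bar\tau_{i-1})}{2\Delta x}\Big)+R_i^u+R_i^\tau,$$ where $\psi_{i+1/2}=\frac12(u_i-\bar u_i)(p(\tau_{i+1})-p(\bar\tau_{i+1}))+\frac12(u_{i+1}-\bar u_{i+1})(p(\tau_i)-p(\bar\tau_i))$, $R_i^u=\frac{\lambda\varepsilon^2}{2\Delta x}(u_i-\bar u_i)(u_{i+1}-2u_i+u_{i-1})$, $R_i^\tau=-\frac{\lambda}{2\Delta x}\Big((p(\tau_i)-p(\bar\tau_i))(\tau_{i+1}-2\tau_i+\tau_{i-1})-(\tau_i-\bar\tau_i)p'(\bar\tau_i)(\bar\tau_{i+1}-2\bar\tau_i+\bar\tau_{i-1})\Big)$.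
   Context: The pressure $p\in C^2((0,\infty))$ satisfies $p>0$, $p'<0$. Fix $\tau_\star>0$, $P(\tau)=\int_{\tau_\star}^\tau p(s)ds$, $P(\tau|\bar\tau)=P(\tau)-P(\bar\tau)-p(\bar\tau)(\tau-\bar\tau)$, $p(\tau|\bar\tau)=p(\tau)-p(\bar\tau)-p'(\bar\tau)(\tau-\bar\tau)$. Parameters $\varepsilon,\sigma,\Delta x,\lambda>0$. Scheme (H): $\frac{d}{dt}\tau_i=\frac{1}{2\Delta x}(u_{i+1}-u_{i-1})+\frac{\lambda}{2\Delta x}(\tau_{i+1}-2\tau_i+\tau_{i-1})$, $\frac{d}{dt}u_i=\frac{\lambda}{2\Delta x}(u_{i+1}-2u_i+u_{i-1})-\frac{1}{2\varepsilon^2\Delta x}(p(\tau_{i+1})-p(\tau_{i-1}))-\frac{\sigma}{\varepsilon^2}u_i$. Scheme (P): $\frac{d}{dt}\bar\tau_i=\frac{1}{2\Delta x}(\bar u_{i+1}-\bar u_{i-1})+\frac{\lambda}{2\Delta x}(\bar\tau_{i+1}-2\bar\tau_i+\bar\tau_{i-1})$, $\sigma\bar u_i=-\frac{p(\bar\tau_{i+1})-p(\bar\tau_{i-1})}{2\Delta x}$. Discrete relative entropy $\eta_i^\varepsilon=\frac{\varepsilon^2}{2}(u_i-\bar u_i)^2-P(\tau_i|\bar\tau_i)$. *)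

theory Defs
  imports "HOL-Analysis.Analysis"
begin

definition Pot :: "(real \<Rightarrow> real) \<Rightarrow> real \<Rightarrow> real \<Rightarrow> real" where
  "Pot p ts x = (if ts \<le> x then integral {ts..x} p else - integral {x..ts} p)"

definition Prel :: "(real \<Rightarrow> real) \<Rightarrow> real \<Rightarrow> real \<Rightarrow> real \<Rightarrow> real" where
  "Prel p ts x xb = Pot p ts x - Pot p ts xb - p xb * (x - xb)"

definition prel :: "(real \<Rightarrow> real) \<Rightarrow> (real \<Rightarrow> real) \<Rightarrow> real \<Rightarrow> real \<Rightarrow> real" where
  "prel p p' x xb = p x - p xb - p' xb * (x - xb)"

definition eta :: "real \<Rightarrow> (real \<Rightarrow> real) \<Rightarrow> real \<Rightarrow> real \<Rightarrow> real \<Rightarrow> real \<Rightarrow> real \<Rightarrow> real" where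
  "eta eps p ts u ub x xb = eps\<^sup>2 / 2 * (u - ub)\<^sup>2 - Prel p ts x xb"

end

theory Submission
  imports Defs
begin

lemma Pot_deriv:
  fixes p :: "real \<Rightarrow> real"
  assumes pc: "continuous_on {0<..} p" and ts: "ts > 0" and x: "x > 0"
  shows "((\<lambda>y. Pot p ts y) has_real_derivative p x) (at x)"
proof -
  define c where "c = min ts x / 2"
  define b where "b = max ts x + 1"
  have c0: "0 < c" "c < x" "c < ts" using ts x by (auto simp: c_def)
  have xb: "x < b" "ts < b" by (auto simp: b_def)
  have cont: "continuous_on {c..b} p" using c0 by (intro continuous_on_subset[OF pc]) auto
  have int: "\<And>l r. c \<le> l \<Longrightarrow> r \<le> b \<Longrightarrow> p integrable_on {l..r}"
    by (rule integrable_continuous_real, rule continuous_on_subset[OF cont]) auto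
  have eq: "Pot p ts y = integral {c..y} p - integral {c..ts} p" if "y \<in> {c<..<b}" for y
  proof (cases "ts \<le> y")
    case True
    have "integral {c..ts} p + integral {ts..y} p = integral {c..y} p"
      using True c0 that by (intro Henstock_Kurzweil_Integration.integral_combine[OF _ _ int[of c y]]) auto
    then show ?thesis using True by (simp add: Pot_def)
  next
    case False
    have "integral {c..y} p + integral {y..ts} p = integral {c..ts} p"
      using False c0 that xb by (intro Henstock_Kurzweil_Integration.integral_combine[OF _ _ int[of c ts]]) auto
    then show ?thesis using False by (simp add: Pot_def)
  qed
  have "((\<lambda>y. integral {c..y} p) has_real_derivative p x) (at x within {c..b})"
    using cont c0 xb by (intro integral_has_real_derivative) auto
  then have "((\<lambda>y. integral {c..y} p) has_real_derivative p x) (at x)"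
    using c0 xb by (simp add: at_within_Icc_at)
  then have "((\<lambda>y. integral {c..y} p - integral {c..ts} p) has_real_derivative p x - 0) (at x)"
    by (intro derivative_intros)
  then have "((\<lambda>y. integral {c..y} p - integral {c..ts} p) has_real_derivative p x) (at x)" by simp
  then show ?thesis
  proof (rule has_field_derivative_transform_within_open[where S="{c<..<b}"])
    show "open {c<..<b}" by simp
    show "x \<in> {c<..<b}" using c0 xb by simp
    fix y assume "y \<in> {c<..<b}"
    then show "integral {c..y} p - integral {c..ts} p = Pot p ts y" by (simp add: eq)
  qed
qed

lemma key:
  fixes E U' V sig dx lam w0 w1 wm b0 b1 bm P0 P1 Pm Q0 Q1 Qm Q2 Qm2 T0 T1 Tm S0 S1 Sm T' S' dp :: real
  assumes sig: "sig \<noteq> 0" and dx: "dx \<noteq> 0"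
    and hU: "E * U' = E * (lam / (2*dx) * (w1 - 2 * w0 + wm)) - (P1 - Pm) / (2*dx) - sig * (w0 - b0) + (Q1 - Qm) / (2*dx)"
    and hT: "T' = (w1 - wm) / (2*dx) + lam / (2*dx) * (T1 - 2 * T0 + Tm)"
    and hS: "S' = (b1 - bm) / (2*dx) + lam / (2*dx) * (S1 - 2 * S0 + Sm)"
    and hC: "1/sig * (Q2 - 2 * Q0 + Qm2) / (2*dx)\<^sup>2 = - (b1 - bm) / (2*dx)"
  shows "E * (w0 - b0) * (U' - V)
     - (P0 * T' - Q0 * S' - (dp * S' * (T0 - S0) + Q0 * (T' - S')))
     + 1 / dx * ((1/2 * (w0 - b0) * (P1 - Q1) + 1/2 * (w1 - b1) * (P0 - Q0)) -
             (1/2 * (wm - bm) * (P0 - Q0) + 1/2 * (w0 - b0) * (Pm - Qm))) =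
                 - sig * (w0 - b0)\<^sup>2
                 + 1/sig * (Q2 - 2 * Q0 + Qm2) / (2*dx)\<^sup>2 * (P0 - Q0 - dp * (T0 - S0))
                 + E/sig * (w0 - b0) * (- sig * V)
                 + lam * E / (2*dx) * (w0 - b0) * (w1 - 2 * w0 + wm)
                 + - lam / (2*dx) * ((P0 - Q0) * (T1 - 2 * T0 + Tm)
                      - (T0 - S0) * dp * (S1 - 2 * S0 + Sm))"
proof -
  define k where "k = 1 / (2*dx)"
  have r1: "\<And>X. X / (2*dx) = X * k" by (simp add: k_def)
  have r2: "1 / dx = 2 * k" using dx by (simp add: k_def)
  have r3: "lam * E / (2*dx) = lam * E * k" "- lam / (2*dx) = - lam * k" by (simp_all add: k_def)
  have a1: "E * (w0 - b0) * (U' - V) = (w0 - b0) * (E * U') - E * (w0 - b0) * V" by (simp add: algebra_simps)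
  have a2: "E/sig * (w0 - b0) * (- sig * V) = - E * (w0 - b0) * V" using sig by simp
  show ?thesis
    unfolding a1 a2 hU hC hT hS r1 r2 r3
    apply (simp add: algebra_simps power2_eq_square)
    apply (simp add: field_simps)
    done
qed

theorem lemma3p2:
  fixes p p' p'' :: "real \<Rightarrow> real"
    and ts eps sig dx lam :: real
    and J :: "real set"
    and tau u tau' u' taub ub taub' ub' :: "int \<Rightarrow> real \<Rightarrow> real"
  assumes p_deriv: "\<And>x. x > 0 \<Longrightarrow> (p has_real_derivative p' x) (at x)"
    and p'_deriv: "\<And>x. x > 0 \<Longrightarrow> (p' has_real_derivative p'' x) (at x)"
    and p''_cont: "continuous_on {0<..} p''"
    and p_pos: "\<And>x. x > 0 \<Longrightarrow> p x > 0"
    and p'_neg: "\<And>x. x > 0 \<Longrightarrow> p' x < 0"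
    and ts_pos: "ts > 0"
    and eps_pos: "eps > 0" and sigma_pos: "sig > 0" and dx_pos: "dx > 0" and lam_pos: "lam > 0"
    and J_open: "open J"
    \<comment> \<open>(tau,u): C^1-in-time solution of scheme (H) on J with tau > 0\<close>
    and tau_der: "\<And>i t. t \<in> J \<Longrightarrow> (tau i has_real_derivative tau' i t) (at t)"
    and u_der: "\<And>i t. t \<in> J \<Longrightarrow> (u i has_real_derivative u' i t) (at t)"
    and tau'_cont: "\<And>i. continuous_on J (tau' i)"
    and u'_cont: "\<And>i. continuous_on J (u' i)"
    and tau_pos: "\<And>i t. t \<in> J \<Longrightarrow> tau i t > 0"
    and H_tau: "\<And>i t. t \<in> J \<Longrightarrow> tau' i t =
        (u (i+1) t - u (i-1) t) / (2*dx) + lam / (2*dx) * (tau (i+1) t - 2 * tau i t + tau (i-1) t)"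
    and H_u: "\<And>i t. t \<in> J \<Longrightarrow> u' i t =
        lam / (2*dx) * (u (i+1) t - 2 * u i t + u (i-1) t)
        - (p (tau (i+1) t) - p (tau (i-1) t)) / (2 * eps\<^sup>2 * dx) - sig / eps\<^sup>2 * u i t"
    \<comment> \<open>(taub,ub): C^1-in-time solution of scheme (P) on J with taub > 0\<close>
    and taub_der: "\<And>i t. t \<in> J \<Longrightarrow> (taub i has_real_derivative taub' i t) (at t)"
    and ub_der: "\<And>i t. t \<in> J \<Longrightarrow> (ub i has_real_derivative ub' i t) (at t)"
    and taub'_cont: "\<And>i. continuous_on J (taub' i)"
    and ub'_cont: "\<And>i. continuous_on J (ub' i)"
    and taub_pos: "\<And>i t. t \<in> J \<Longrightarrow> taub i t > 0"
    and P_tau: "\<And>i t. t \<in> J \<Longrightarrow> taub' i t =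
        (ub (i+1) t - ub (i-1) t) / (2*dx) + lam / (2*dx) * (taub (i+1) t - 2 * taub i t + taub (i-1) t)"
    and P_u: "\<And>i t. t \<in> J \<Longrightarrow> sig * ub i t = - (p (taub (i+1) t) - p (taub (i-1) t)) / (2*dx)"
    and t_in: "t \<in> J"
  shows "let psi = (\<lambda>j. 1/2 * (u j t - ub j t) * (p (tau (j+1) t) - p (taub (j+1) t))
                        + 1/2 * (u (j+1) t - ub (j+1) t) * (p (tau j t) - p (taub j t)));
             Ru = lam * eps\<^sup>2 / (2*dx) * (u i t - ub i t) * (u (i+1) t - 2 * u i t + u (i-1) t);
             Rtau = - lam / (2*dx) * ((p (tau i t) - p (taub i t)) * (tau (i+1) t - 2 * tau i t + tau (i-1) t)
                      - (tau i t - taub i t) * p' (taub i t) * (taub (i+1) t - 2 * taub i t + taub (i-1) t))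
         in \<exists>D. ((\<lambda>s. eta eps p ts (u i s) (ub i s) (tau i s) (taub i s)) has_real_derivative D) (at t)
             \<and> D + 1/dx * (psi i - psi (i-1)) =
                 - sig * (u i t - ub i t)\<^sup>2
                 + 1/sig * (p (taub (i+2) t) - 2 * p (taub i t) + p (taub (i-2) t)) / (2*dx)\<^sup>2
                     * prel p p' (tau i t) (taub i t)
                 + eps\<^sup>2/sig * (u i t - ub i t)
                     * deriv (\<lambda>s. (p (taub (i+1) s) - p (taub (i-1) s)) / (2*dx)) t
                 + Ru + Rtau"
proof -
  have pc: "continuous_on {0<..} p"
    by (intro continuous_at_imp_continuous_on ballI DERIV_isCont[OF p_deriv]) auto
  have dT: "((\<lambda>s. Pot p ts (tau i s)) has_real_derivative p (tau i t) * tau' i t) (at t)"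
    by (rule DERIV_chain2[OF Pot_deriv[OF pc ts_pos tau_pos[OF t_in]] tau_der[OF t_in]])
  have dTb: "((\<lambda>s. Pot p ts (taub i s)) has_real_derivative p (taub i t) * taub' i t) (at t)"
    by (rule DERIV_chain2[OF Pot_deriv[OF pc ts_pos taub_pos[OF t_in]] taub_der[OF t_in]])
  have dpb: "((\<lambda>s. p (taub i s)) has_real_derivative p' (taub i t) * taub' i t) (at t)"
    by (rule DERIV_chain2[OF p_deriv[OF taub_pos[OF t_in]] taub_der[OF t_in]])
  define D where "D = eps\<^sup>2 * (u i t - ub i t) * (u' i t - ub' i t)
     - (p (tau i t) * tau' i t - p (taub i t) * taub' i t
        - (p' (taub i t) * taub' i t * (tau i t - taub i t) + p (taub i t) * (tau' i t - taub' i t)))"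
  have dEta: "((\<lambda>s. eta eps p ts (u i s) (ub i s) (tau i s) (taub i s)) has_real_derivative D) (at t)"
    unfolding eta_def Prel_def
    apply (rule derivative_eq_intros dT dTb dpb u_der[OF t_in] ub_der[OF t_in] tau_der[OF t_in] taub_der[OF t_in] refl)+
    by (simp add: D_def algebra_simps power2_eq_square)
  have dq: "((\<lambda>s. (p (taub (i+1) s) - p (taub (i-1) s)) / (2*dx)) has_real_derivative -sig * ub' i t) (at t)"
  proof (rule has_field_derivative_transform_within_open[where S=J])
    show "((\<lambda>s. -sig * ub i s) has_real_derivative -sig * ub' i t) (at t)"
      by (rule DERIV_cmult[OF ub_der[OF t_in]])
    fix s assume "s \<in> J"
    from P_u[OF this, of i] show "-sig * ub i s = (p (taub (i+1) s) - p (taub (i-1) s)) / (2*dx)"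
      by (simp add: divide_simps)
  qed (use J_open t_in in auto)
  have deq: "deriv (\<lambda>s. (p (taub (i+1) s) - p (taub (i-1) s)) / (2*dx)) t = -sig * ub' i t"
    by (rule DERIV_imp_deriv[OF dq])
  have e1: "u' i t = lam / (2*dx) * (u (i+1) t - 2 * u i t + u (i-1) t)
        - (p (tau (i+1) t) - p (tau (i-1) t)) / (2 * eps\<^sup>2 * dx) - sig / eps\<^sup>2 * u i t"
    by (rule H_u[OF t_in])
  have e2: "tau' i t = (u (i+1) t - u (i-1) t) / (2*dx) + lam / (2*dx) * (tau (i+1) t - 2 * tau i t + tau (i-1) t)"
    by (rule H_tau[OF t_in])
  have e3: "taub' i t = (ub (i+1) t - ub (i-1) t) / (2*dx) + lam / (2*dx) * (taub (i+1) t - 2 * taub i t + taub (i-1) t)"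
    by (rule P_tau[OF t_in])
  have e4: "ub i t = - (p (taub (i+1) t) - p (taub (i-1) t)) / (2 * dx * sig)"
    using P_u[OF t_in, of i] sigma_pos dx_pos by (simp add: field_simps)
  have e5: "ub (i+1) t = - (p (taub (i+2) t) - p (taub i t)) / (2 * dx * sig)"
    using P_u[OF t_in, of "i+1"] sigma_pos dx_pos by (simp add: field_simps add.assoc)
  have e6: "ub (i-1) t = - (p (taub i t) - p (taub (i-2) t)) / (2 * dx * sig)"
    using P_u[OF t_in, of "i-1"] sigma_pos dx_pos by (simp add: field_simps diff_diff_eq)
  have ieq: "i - 1 + 1 = i" by simp
  have hU: "eps\<^sup>2 * u' i t = eps\<^sup>2 * (lam / (2*dx) * (u (i+1) t - 2 * u i t + u (i-1) t))
      - (p (tau (i+1) t) - p (tau (i-1) t)) / (2*dx) - sig * (u i t - ub i t)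
      + (p (taub (i+1) t) - p (taub (i-1) t)) / (2*dx)"
  proof -
    have h1: "eps\<^sup>2 * u' i t = eps\<^sup>2 * (lam / (2*dx) * (u (i+1) t - 2 * u i t + u (i-1) t))
      - (p (tau (i+1) t) - p (tau (i-1) t)) / (2*dx) - sig * u i t"
      unfolding e1 using eps_pos dx_pos by (simp add: field_simps power2_eq_square)
    have h2: "sig * (u i t - ub i t) = sig * u i t - sig * ub i t" by (simp add: algebra_simps)
    have h3: "- (p (taub (i+1) t) - p (taub (i-1) t)) / (2*dx) = - ((p (taub (i+1) t) - p (taub (i-1) t)) / (2*dx))"
      by (simp add: divide_simps)
    show ?thesis using h1 h2 h3 P_u[OF t_in, of i] by linarith
  qed
  have hC: "1/sig * (p (taub (i+2) t) - 2 * p (taub i t) + p (taub (i-2) t)) / (2*dx)\<^sup>2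
      = - (ub (i+1) t - ub (i-1) t) / (2*dx)"
    unfolding e5 e6 using sigma_pos dx_pos by (simp add: field_simps power2_eq_square)
  show ?thesis
    unfolding Let_def
  proof (intro exI conjI, rule dEta)
    show "D + 1 / dx * ((1/2 * (u i t - ub i t) * (p (tau (i+1) t) - p (taub (i+1) t))
                        + 1/2 * (u (i+1) t - ub (i+1) t) * (p (tau i t) - p (taub i t))) -
             (1/2 * (u (i-1) t - ub (i-1) t) * (p (tau (i-1+1) t) - p (taub (i-1+1) t))
                        + 1/2 * (u (i-1+1) t - ub (i-1+1) t) * (p (tau (i-1) t) - p (taub (i-1) t)))) =
                 - sig * (u i t - ub i t)\<^sup>2
                 + 1/sig * (p (taub (i+2) t) - 2 * p (taub i t) + p (taub (i-2) t)) / (2*dx)\<^sup>2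
                     * prel p p' (tau i t) (taub i t)
                 + eps\<^sup>2/sig * (u i t - ub i t)
                     * deriv (\<lambda>s. (p (taub (i+1) s) - p (taub (i-1) s)) / (2*dx)) t
                 + lam * eps\<^sup>2 / (2*dx) * (u i t - ub i t) * (u (i+1) t - 2 * u i t + u (i-1) t)
                 + - lam / (2*dx) * ((p (tau i t) - p (taub i t)) * (tau (i+1) t - 2 * tau i t + tau (i-1) t)
                      - (tau i t - taub i t) * p' (taub i t) * (taub (i+1) t - 2 * taub i t + taub (i-1) t))"
      unfolding deq D_def prel_def ieq
      by (rule key[OF _ _ hU e2 e3 hC]) (use sigma_pos dx_pos in auto)
  qed
qed

end
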